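(* Let $A\in M_n$ be normal and $c\in\mathbb{R}^n$. Then $W(A;c)$ is the intersection of finitely many closed half-planes of $\mathbb{C}$ and is bounded; i.e. $W(A;c)$ is a convex polygon (possibly empty, a single point, or a line segment).
   Context: $M_n$ denotes the space of $n\times n$ complex matrices. For $A\in M_n$ and $\theta\in\mathbb{R}$, put $H_\theta(A)=\frac{1}{2}(e^{i\theta}A+e^{-i\theta}A^* )$, a Hermitian matrix. For a Hermitian $H\in M_n$, $\lambda_1(H)\ge\lambda_2(H)\ge\cdots\ge\lambda_n(H)$ denote its eigenvalues in nonincreasing order, counted with multiplicity. For $c=(c_1,\dots,c_n)^t\in\mathbb{R}^n$ the weighted numerical range of $A$ is $$W(A;c)=\bigcap_{\theta\in[0,2\pi)}\Big\{v\in\mathbb{C}:\ \mathrm{Re}(e^{i\theta}v)\le \sum_{j=1}^n c_j\lambda_j(H_\theta(A))\Big\}.$$ *)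

theory Defs
  imports "HOL-Analysis.Analysis"
    "Jordan_Normal_Form.Schur_Decomposition"
    "Jordan_Normal_Form.Char_Poly"
    "HOL-Computational_Algebra.Fundamental_Theorem_Algebra"
begin

definition normal_mat :: "complex mat \<Rightarrow> bool" where
  "normal_mat A \<longleftrightarrow> A * mat_adjoint A = mat_adjoint A * A"

definition H_theta :: "real \<Rightarrow> complex mat \<Rightarrow> complex mat" where
  "H_theta \<theta> A = (1/2 :: complex) \<cdot>\<^sub>m
     (exp (\<i> * of_real \<theta>) \<cdot>\<^sub>m A + exp (- (\<i> * of_real \<theta>)) \<cdot>\<^sub>m mat_adjoint A)"

text \<open>For a Hermitian matrix all
  roots are real, so taking real parts loses nothing. Indexing is 0-based:
  herm_eig H j is lambda_{j+1}(H).\<close>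
definition herm_eigs :: "complex mat \<Rightarrow> real list" where
  "herm_eigs H = rev (sorted_list_of_multiset (image_mset Re (proots (char_poly H))))"

definition herm_eig :: "complex mat \<Rightarrow> nat \<Rightarrow> real" where
  "herm_eig H j = herm_eigs H ! j"

text \<open>Weighted numerical range W(A;c); the weight vector c is c_1..c_n stored as c 0 .. c (n-1).\<close>
definition weighted_nr :: "nat \<Rightarrow> complex mat \<Rightarrow> (nat \<Rightarrow> real) \<Rightarrow> complex set" where
  "weighted_nr n A c = (\<Inter>\<theta>\<in>{0..<2*pi}.
     {v. Re (exp (\<i> * of_real \<theta>) * v) \<le> (\<Sum>j<n. c j * herm_eig (H_theta \<theta> A) j)})"

definition closed_halfplane :: "complex \<Rightarrow> real \<Rightarrow> complex set" where
  "closed_halfplane a b = {v. Re (cnj a * v) \<le> b}"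

end

theory Submission
  imports Defs
begin


lemma adj_dim[simp]: "dim_row (mat_adjoint A) = dim_col A" "dim_col (mat_adjoint A) = dim_row A"
  unfolding mat_adjoint_def by auto

lemma adj_index[simp]: "i < dim_col A \<Longrightarrow> j < dim_row A \<Longrightarrow> mat_adjoint A $$ (i,j) = conjugate (A $$ (j,i))"
  unfolding mat_adjoint_def by (auto simp: mat_of_rows_def)

lemma adj_carrier[simp]: "A \<in> carrier_mat n m \<Longrightarrow> mat_adjoint A \<in> carrier_mat m n"
  by auto

lemma adj_adj[simp]: "mat_adjoint (mat_adjoint (A :: complex mat)) = A"
  by (rule eq_matI, auto)

lemma adj_mult: fixes A B :: "complex mat"
  assumes "A \<in> carrier_mat n m" "B \<in> carrier_mat m k"
  shows "mat_adjoint (A * B) = mat_adjoint B * mat_adjoint A"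
proof (rule eq_matI)
  fix i j assume i: "i < dim_row (mat_adjoint B * mat_adjoint A)" and j: "j < dim_col (mat_adjoint B * mat_adjoint A)"
  have "mat_adjoint (A * B) $$ (i, j) = cnj (row A j \<bullet> col B i)" using assms i j by auto
  also have "\<dots> = row (mat_adjoint B) i \<bullet> col (mat_adjoint A) j"
    using assms i j unfolding scalar_prod_def by (auto simp: sum_conjugate mult.commute)
  finally show "mat_adjoint (A * B) $$ (i, j) = (mat_adjoint B * mat_adjoint A) $$ (i, j)"
    using assms i j by auto
qed (use assms in auto)

lemma adj_smult: "mat_adjoint ((a::complex) \<cdot>\<^sub>m A) = cnj a \<cdot>\<^sub>m mat_adjoint A"
  by (rule eq_matI, auto)

lemma adj_add: "A \<in> carrier_mat n m \<Longrightarrow> B \<in> carrier_mat n m \<Longrightarrow> mat_adjoint ((A::complex mat) + B) = mat_adjoint A + mat_adjoint B"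
  by (rule eq_matI, auto)

lemma adj_one[simp]: "mat_adjoint (1\<^sub>m n :: complex mat) = 1\<^sub>m n"
  by (rule eq_matI, auto)



definition nrm :: "complex vec \<Rightarrow> complex vec" where
  "nrm w = (1 / complex_of_real (sqrt (Re (w \<bullet>c w)))) \<cdot>\<^sub>v w"

lemma cscal_smult: assumes "u \<in> carrier_vec n" "w \<in> carrier_vec n"
  shows "(a \<cdot>\<^sub>v u) \<bullet>c (b \<cdot>\<^sub>v w) = a * cnj b * (u \<bullet>c w)"
  using assms by (simp add: conjugate_smult_vec)

lemma cscal_self_real: assumes "w \<in> carrier_vec n"
  shows "w \<bullet>c w = complex_of_real (Re (w \<bullet>c w))" "Re (w \<bullet>c w) \<ge> 0"
proof -
  have "w \<bullet>c w \<ge> 0" by (rule conjugate_square_ge_0_vec)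
  then show "w \<bullet>c w = complex_of_real (Re (w \<bullet>c w))" "Re (w \<bullet>c w) \<ge> 0"
    by (auto simp: less_eq_complex_def complex_eq_iff)
qed

lemma cscal_self_pos: assumes "w \<in> carrier_vec n" "w \<noteq> 0\<^sub>v n"
  shows "Re (w \<bullet>c w) > 0"
proof -
  have "w \<bullet>c w > 0" using conjugate_square_greater_0_vec[OF assms(1)] assms(2) by auto
  then show ?thesis by (auto simp: less_complex_def)
qed

lemma nrm_carrier[simp]: "w \<in> carrier_vec n \<Longrightarrow> nrm w \<in> carrier_vec n"
  unfolding nrm_def by auto

lemma nrm_cscal: assumes "u \<in> carrier_vec n" "w \<in> carrier_vec n"
  shows "nrm u \<bullet>c nrm w = complex_of_real (1 / (sqrt (Re (u \<bullet>c u)) * sqrt (Re (w \<bullet>c w)))) * (u \<bullet>c w)"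
  unfolding nrm_def cscal_smult[OF assms] by simp

lemma nrm_self: assumes "w \<in> carrier_vec n" "w \<noteq> 0\<^sub>v n"
  shows "nrm w \<bullet>c nrm w = 1"
proof -
  have p: "Re (w \<bullet>c w) > 0" using cscal_self_pos[OF assms] .
  have "nrm w \<bullet>c nrm w = complex_of_real (1 / (sqrt (Re (w \<bullet>c w)) * sqrt (Re (w \<bullet>c w)))) * complex_of_real (Re (w \<bullet>c w))"
    unfolding nrm_cscal[OF assms(1) assms(1)] using cscal_self_real(1)[OF assms(1)] by metis
  also have "\<dots> = complex_of_real (1 / (sqrt (Re (w \<bullet>c w)) * sqrt (Re (w \<bullet>c w))) * Re (w \<bullet>c w))"
    by simp
  also have "sqrt (Re (w \<bullet>c w)) * sqrt (Re (w \<bullet>c w)) = Re (w \<bullet>c w)" using p by simp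
  also have "1 / Re (w \<bullet>c w) * Re (w \<bullet>c w) = 1" using p by simp
  finally show ?thesis by simp
qed

lemma nrm_orth: assumes "u \<in> carrier_vec n" "w \<in> carrier_vec n" "u \<noteq> 0\<^sub>v n" "w \<noteq> 0\<^sub>v n"
  shows "(nrm u \<bullet>c nrm w = 0) = (u \<bullet>c w = 0)"
proof -
  have "Re (u \<bullet>c u) > 0" "Re (w \<bullet>c w) > 0" using cscal_self_pos assms by auto
  then show ?thesis unfolding nrm_cscal[OF assms(1,2)] by simp
qed

lemma corthogonal_nonzero: assumes "corthogonal ws" "set ws \<subseteq> carrier_vec n" "w \<in> set ws"
  shows "w \<noteq> 0\<^sub>v n"
proof
  assume w0: "w = 0\<^sub>v n"
  from assms(3) obtain i where i: "i < length ws" "ws ! i = w" by (auto simp: in_set_conv_nth)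
  have "ws ! i \<bullet>c ws ! i \<noteq> 0" using corthogonalD[OF assms(1) i(1) i(1)] by auto
  then show False using i w0 by simp
qed

lemma corthogonal_nrm: assumes "corthogonal ws" "set ws \<subseteq> carrier_vec n"
  shows "corthogonal (map nrm ws)"
proof (intro corthogonalI)
  fix i j assume i: "i < length (map nrm ws)" and j: "j < length (map nrm ws)"
  have c: "ws ! i \<in> carrier_vec n" "ws ! j \<in> carrier_vec n" using assms i j by auto
  have nz: "ws ! i \<noteq> 0\<^sub>v n" "ws ! j \<noteq> 0\<^sub>v n" using corthogonal_nonzero[OF assms] i j by auto
  show "(map nrm ws ! i \<bullet>c map nrm ws ! j = 0) = (i \<noteq> j)"
    using nrm_orth[OF c nz] corthogonalD[OF assms(1)] i j by auto
qed

lemma adj_four_block_diag: fixes P :: "complex mat"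
  assumes "P \<in> carrier_mat m m"
  shows "mat_adjoint (four_block_mat (1\<^sub>m 1) (0\<^sub>m 1 m) (0\<^sub>m m 1) P)
       = four_block_mat (1\<^sub>m 1) (0\<^sub>m 1 m) (0\<^sub>m m 1) (mat_adjoint P)"
  by (rule eq_matI, insert assms, auto)

lemma corthogonal_inv_adj: assumes "set ws \<subseteq> carrier_vec n" "\<And>w. w \<in> set ws \<Longrightarrow> w \<bullet>c w = 1"
  shows "corthogonal_inv (mat_of_cols n ws) = mat_adjoint (mat_of_cols n ws)"
proof -
  have eq: "map vec_inv ws = map conjugate ws" by (rule map_cong, insert assms(2), auto simp: vec_inv_def)
  show ?thesis unfolding corthogonal_inv_def mat_adjoint_def cols_mat_of_cols[OF assms(1)] eq by (rule refl)
qed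

theorem unitary_schur:
  assumes "(A::complex mat) \<in> carrier_mat n n"
      and "char_poly A = (\<Prod> (e :: complex) \<leftarrow> es. [:- e, 1:])"
  shows "\<exists>B P. similar_mat_wit A B P (mat_adjoint P) \<and> upper_triangular B \<and> diag_mat B = es"
  using assms
proof (induct es arbitrary: n A)
  case Nil
  with degree_monic_char_poly[of A n]
  show ?case
    by (intro exI[of _ A] exI[of _ "1\<^sub>m n"]) (auto intro: similar_mat_wit_refl simp: diag_mat_def)
next
  case (Cons e es n A)
  let ?n1 = "n - 1"
  from Cons have A: "A \<in> carrier_mat n n" and dim: "dim_row A = n" by auto
  let ?cp = "char_poly A"
  from Cons(3)
  have cp: "?cp = [: -e, 1 :] * (\<Prod>e \<leftarrow> es. [:- e, 1:])" by auto
  have mon: "monic (\<Prod>e\<leftarrow> es. [:- e, 1:])" by (rule monic_prod_list, auto)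
  have deg: "degree ?cp = Suc (degree (\<Prod>e\<leftarrow> es. [:- e, 1:]))" unfolding cp
    by (subst degree_mult_eq, insert mon, auto)
  with degree_monic_char_poly[OF A] have n: "n \<noteq> 0" by auto
  define v0 where "v0 = find_eigenvector A e"
  define b where "b = basis_completion v0"
  define ws0 where "ws0 = gram_schmidt n b"
  define ws where "ws = map nrm ws0"
  define v where "v = nrm v0"
  define W where "W = mat_of_cols n ws"
  define W' where "W' = corthogonal_inv W"
  define A' where "A' = W' * A * W"
  obtain A1 A2 A0 A3 where splitA': "split_block A' 1 1 = (A1,A2,A0,A3)"
    by (cases "split_block A' 1 1", auto)
  have e: "eigenvalue A e"
    unfolding eigenvalue_root_char_poly[OF A] cp by simp
  from find_eigenvector[OF A e] have ev: "eigenvector A v0 e" unfolding v0_def .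
  from this[unfolded eigenvector_def]
  have v0c[simp]: "v0 \<in> carrier_vec n" and v00: "v0 \<noteq> 0\<^sub>v n" using A by auto
  interpret cof_vec_space n "TYPE(complex)" .
  from basis_completion[OF v0c v00, folded b_def]
  have span_b: "span (set b) = carrier_vec n" and dist_b: "distinct b"
    and indep: "\<not> lin_dep (set b)" and b: "set b \<subseteq> carrier_vec n" and hdb: "hd b = v0"
    and len_b: "length b = n" by auto
  from hdb len_b n obtain vs where bv: "b = v0 # vs" by (cases b, auto)
  from gram_schmidt_result[OF b dist_b indep refl, folded ws0_def]
  have ws0: "set ws0 \<subseteq> carrier_vec n" "corthogonal ws0" "length ws0 = n"
    by (auto simp: len_b)
  from gram_schmidt_hd[OF v0c, of vs, folded bv] have hdws0: "hd ws0 = v0" unfolding ws0_def .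
  have ws: "set ws \<subseteq> carrier_vec n" "corthogonal ws" "length ws = n"
    using ws0 corthogonal_nrm[OF ws0(2,1)] unfolding ws_def by auto
  have hdws: "hd ws = v" unfolding ws_def v_def using hdws0 ws0 n by (cases ws0, auto)
  have vc[simp]: "v \<in> carrier_vec n" unfolding v_def by simp
  have vnz: "v \<noteq> 0\<^sub>v n"
  proof
    assume "v = 0\<^sub>v n"
    then have "v \<bullet>c v = 0" by simp
    then show False using nrm_self[OF v0c v00] unfolding v_def by simp
  qed
  have eigen0: "A *\<^sub>v v0 = e \<cdot>\<^sub>v v0" using ev unfolding eigenvector_def by auto
  have eigen[simp]: "A *\<^sub>v v = e \<cdot>\<^sub>v v"
    unfolding v_def nrm_def mult_mat_vec[OF A v0c] eigen0 by (auto simp: smult_smult_assoc mult.commute)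
  have unit: "\<And>w. w \<in> set ws \<Longrightarrow> w \<bullet>c w = 1"
    unfolding ws_def using ws0 corthogonal_nonzero[OF ws0(2,1)] nrm_self by auto
  have W'adj: "W' = mat_adjoint W" unfolding W'_def W_def by (rule corthogonal_inv_adj[OF ws(1) unit])
  have orth_W: "corthogonal_mat W" using orthogonal_mat_of_cols ws unfolding W_def.
  have W: "W \<in> carrier_mat n n"
    using ws unfolding W_def using mat_of_cols_carrier(1)[of n ws] by auto
  have W': "W' \<in> carrier_mat n n" unfolding W'_def corthogonal_inv_def using W
    by (auto simp: mat_of_rows_def)
  from corthogonal_inv_result[OF orth_W]
  have W'W: "inverts_mat W' W" unfolding W'_def .
  hence WW': "inverts_mat W W'" using mat_mult_left_right_inverse[OF W' W] W' W
    unfolding inverts_mat_def by auto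
  have A': "A' \<in> carrier_mat n n" using W W' A unfolding A'_def by auto
  have A'A_wit: "similar_mat_wit A' A W' W"
    by (rule similar_mat_witI[of _ _ n], insert W W' A A' W'W WW', auto simp: A'_def
    inverts_mat_def)
  hence A'A: "similar_mat A' A" unfolding similar_mat_def by blast
  from similar_mat_wit_sym[OF A'A_wit] have simAA': "similar_mat_wit A A' W W'" by auto
  let ?f = "(\<lambda> i. if i = 0 then e else 0)"
  have col0: "col A' 0 = vec n ?f"
    unfolding A'_def W'_def W_def
    using corthogonal_col_ev_0[OF A vc vnz eigen n hdws ws].
  from A' n have "dim_row A' = 1 + ?n1" "dim_col A' = 1 + ?n1" by auto
  from split_block[OF splitA' this] have A2: "A2 \<in> carrier_mat 1 ?n1"
    and A3: "A3 \<in> carrier_mat ?n1 ?n1"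
    and A'block: "A' = four_block_mat A1 A2 A0 A3" by auto
  have A1id: "A1 = mat 1 1 (\<lambda> _. e)"
    using splitA'[unfolded split_block_def Let_def] arg_cong[OF col0, of "\<lambda> v. Matrix.vec_index v 0"] A' n
    by (auto simp: col_def)
  have A1: "A1 \<in> carrier_mat 1 1" unfolding A1id by auto
  {
    fix i
    assume "i < ?n1"
    with arg_cong[OF col0, of "\<lambda> v. Matrix.vec_index v (Suc i)"] A'
    have "A' $$ (Suc i, 0) = 0" by auto
  } note A'0 = this
  have A0id: "A0 = 0\<^sub>m ?n1 1"
    using splitA'[unfolded split_block_def Let_def] A'0 A' by auto
  have A0: "A0 \<in> carrier_mat ?n1 1" unfolding A0id by auto
  from cp char_poly_similar[OF A'A]
  have cp: "char_poly A' = [: -e,1 :] * (\<Prod> e \<leftarrow> es. [:- e, 1:])" by simp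
  also have "char_poly A' = char_poly A1 * char_poly A3"
    unfolding A'block A0id
    by (rule char_poly_four_block_zeros_col[OF A1 A2 A3])
  also have "char_poly A1 = [: -e,1 :]"
    by (simp add: A1id char_poly_defs det_def sign_def)
  finally have cp: "char_poly A3 = (\<Prod> e \<leftarrow> es. [:- e, 1:])"
    by (metis mult_cancel_left pCons_eq_0_iff zero_neq_one)
  from Cons(1)[OF A3 cp] obtain B P' where simIH: "similar_mat_wit A3 B P' (mat_adjoint P')"
    and ut: "upper_triangular B" and diag: "diag_mat B = es" by auto
  define Q' where "Q' = mat_adjoint P'"
  note simIH = simIH[folded Q'_def]
  from similar_mat_witD2[OF A3 simIH]
  have B: "B \<in> carrier_mat ?n1 ?n1" and P': "P' \<in> carrier_mat ?n1 ?n1" and Q': "Q' \<in> carrier_mat ?n1 ?n1"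
    and PQ': "P' * Q' = 1\<^sub>m ?n1" by auto
  let ?P' = "four_block_mat (1\<^sub>m 1) (0\<^sub>m 1 ?n1) (0\<^sub>m ?n1 1) P'"
  let ?Q' = "four_block_mat (1\<^sub>m 1) (0\<^sub>m 1 ?n1) (0\<^sub>m ?n1 1) Q'"
  define C where "C = four_block_mat A1 (A2 * P') A0 B"
  have A0_eq: "A0 = P' * A0 * 1\<^sub>m 1" unfolding A0id using P' by auto
  have simA'C: "similar_mat_wit A' C ?P' ?Q'" unfolding A'block C_def
    by (rule similar_mat_wit_four_block[OF similar_mat_wit_refl[OF A1] simIH _ A0_eq A1 A3 A0],
    insert PQ' A2 P' Q', auto)
  have ut1: "upper_triangular A1" unfolding A1id by auto
  have ut: "upper_triangular C" unfolding C_def A0id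
    by (intro upper_triangular_four_block[OF _ B ut1 ut], auto simp: A1id)
  from A1id have diagA1: "diag_mat A1 = [e]" unfolding diag_mat_def by auto
  from diag_four_block_mat[OF A1 B] have diag: "diag_mat C = e # es" unfolding diag diagA1 C_def by simp
  have P'c: "?P' \<in> carrier_mat n n" using P' n by (metis four_block_carrier_mat one_carrier_mat Suc_pred' add_0 neq0_conv plus_1_eq_Suc)
  have Qadj: "?Q' * W' = mat_adjoint (W * ?P')"
    unfolding adj_mult[OF W P'c] adj_four_block_diag[OF P'] Q'_def W'adj ..
  have sim: "similar_mat_wit A C (W * ?P') (mat_adjoint (W * ?P'))"
    using similar_mat_wit_trans[OF simAA' simA'C] unfolding Qadj .
  show ?case
    apply (rule exI[of _ C], rule exI[of _ "W * ?P'"], intro conjI)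
      apply (fact sim) apply (fact ut) by (fact diag)
qed



lemma proots_lin_prod: "proots (\<Prod>a\<leftarrow>(xs::complex list). [:- a, 1:]) = mset xs"
proof (induct xs)
  case (Cons a xs)
  have nz: "(\<Prod>a\<leftarrow>xs. [:- a, 1:]) \<noteq> (0 :: complex poly)"
  proof -
    have "\<And>a. [:- a, 1:] \<noteq> (0::complex poly)" by simp
    then have "0 \<notin> set (map (\<lambda>a. [:- a, 1:]) xs)" by (metis (no_types, lifting) ex_map_conv in_set_conv_nth)
    then show ?thesis by (simp only: prod_list_zero_iff) simp
  qed
  have "proots (\<Prod>a\<leftarrow>(a#xs). [:- a, 1:]) = proots [:- a, 1:] + proots (\<Prod>a\<leftarrow>xs. [:- a, 1:])"
    unfolding list.map prod_list.Cons by (rule proots_mult, auto simp: nz)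
  also have "proots [:- a, 1:] = {#a#}" using proots_linear_factor[of "-a"] by simp
  finally show ?case using Cons by simp
qed simp

lemma cns: "(complex_of_real (cmod z))\<^sup>2 = z * cnj z"
  by (metis complex_norm_square of_real_power)

lemma normal_ut_diag:
  fixes T :: "complex mat"
  assumes T: "T \<in> carrier_mat n n" and ut: "upper_triangular T"
    and nm: "T * mat_adjoint T = mat_adjoint T * T"
  shows "\<And>i j. i < n \<Longrightarrow> j < n \<Longrightarrow> i \<noteq> j \<Longrightarrow> T $$ (i,j) = 0"
proof -
  have low: "\<And>i j. j < i \<Longrightarrow> i < n \<Longrightarrow> T $$ (i,j) = 0" using ut T by auto
  have rs: "(\<Sum>j<n. (cmod (T $$ (i,j)))\<^sup>2) = (\<Sum>k<n. (cmod (T $$ (k,i)))\<^sup>2)" if i: "i < n" for i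
  proof -
    have "complex_of_real (\<Sum>j<n. (cmod (T $$ (i,j)))\<^sup>2) = (T * mat_adjoint T) $$ (i,i)"
      using T i by (auto simp: scalar_prod_def cns lessThan_atLeast0 intro!: sum.cong)
    also have "\<dots> = (mat_adjoint T * T) $$ (i,i)" using nm by simp
    also have "\<dots> = complex_of_real (\<Sum>k<n. (cmod (T $$ (k,i)))\<^sup>2)"
      using T i by (auto simp: scalar_prod_def cns lessThan_atLeast0 mult.commute intro!: sum.cong)
    finally show ?thesis using of_real_eq_iff by blast
  qed
  have main: "\<forall>j. i < j \<and> j < n \<longrightarrow> T $$ (i,j) = 0" for i
  proof (induct i rule: less_induct)
    case (less i)
    show ?case
    proof (cases "i < n")
      case False then show ?thesis by auto
    next
      case i: True
      have col0: "k < n \<Longrightarrow> k \<noteq> i \<Longrightarrow> T $$ (k,i) = 0" for k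
        using less[of k] low[of i k] i by (cases "k < i") auto
      have "(\<Sum>k<n. (cmod (T $$ (k,i)))\<^sup>2) = (\<Sum>k\<in>{i}. (cmod (T $$ (k,i)))\<^sup>2)"
        by (rule sum.mono_neutral_right, insert i col0, auto)
      also have "\<dots> = (\<Sum>j\<in>{i}. (cmod (T $$ (i,j)))\<^sup>2)" by simp
      finally have eq: "(\<Sum>j<n. (cmod (T $$ (i,j)))\<^sup>2) = (\<Sum>j\<in>{i}. (cmod (T $$ (i,j)))\<^sup>2)"
        using rs[OF i] by simp
      have split: "(\<Sum>j<n. (cmod (T $$ (i,j)))\<^sup>2) = (\<Sum>j\<in>{i}. (cmod (T $$ (i,j)))\<^sup>2) + (\<Sum>j\<in>{..<n}-{i}. (cmod (T $$ (i,j)))\<^sup>2)"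
        using i by (subst sum.subset_diff[of "{i}"]) auto
      have z: "(\<Sum>j\<in>{..<n}-{i}. (cmod (T $$ (i,j)))\<^sup>2) = 0" using eq split by simp
      have "\<forall>j\<in>{..<n}-{i}. (cmod (T $$ (i,j)))\<^sup>2 = 0"
        using sum_nonneg_eq_0_iff[of "{..<n}-{i}" "\<lambda>j. (cmod (T $$ (i,j)))\<^sup>2"] z by simp
      then show ?thesis by auto
    qed
  qed
  fix i j assume "i < n" "j < n" "i \<noteq> j"
  then show "T $$ (i,j) = 0" using main[of i] low[of j i] low[of i j] by (cases "i < j") auto
qed

lemma sqm: "(X :: complex mat) \<in> carrier_mat n n \<Longrightarrow> Y \<in> carrier_mat n n \<Longrightarrow> X * Y \<in> carrier_mat n n"
  by (rule mult_carrier_mat)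
lemma sqsm: "(X :: complex mat) \<in> carrier_mat n n \<Longrightarrow> k \<cdot>\<^sub>m X \<in> carrier_mat n n" by simp
lemma sqad: "(X :: complex mat) \<in> carrier_mat n n \<Longrightarrow> Y \<in> carrier_mat n n \<Longrightarrow> X + Y \<in> carrier_mat n n" by simp
lemma sqassoc: "(X :: complex mat) \<in> carrier_mat n n \<Longrightarrow> Y \<in> carrier_mat n n \<Longrightarrow> Z \<in> carrier_mat n n \<Longrightarrow> X * Y * Z = X * (Y * Z)"
  by (rule assoc_mult_mat)
lemma sqr1: "(X :: complex mat) \<in> carrier_mat n n \<Longrightarrow> X * 1\<^sub>m n = X" by (rule right_mult_one_mat)
lemma sql1: "(X :: complex mat) \<in> carrier_mat n n \<Longrightarrow> 1\<^sub>m n * X = X" by (rule left_mult_one_mat)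
lemma sqsmr: "(X :: complex mat) \<in> carrier_mat n n \<Longrightarrow> Y \<in> carrier_mat n n \<Longrightarrow> X * (k \<cdot>\<^sub>m Y) = k \<cdot>\<^sub>m (X * Y)"
  by (rule mult_smult_distrib)
lemma sqsml: "(X :: complex mat) \<in> carrier_mat n n \<Longrightarrow> Y \<in> carrier_mat n n \<Longrightarrow> (k \<cdot>\<^sub>m X) * Y = k \<cdot>\<^sub>m (X * Y)"
  by (rule mult_smult_assoc_mat)
lemma sqadr: "(X :: complex mat) \<in> carrier_mat n n \<Longrightarrow> Y \<in> carrier_mat n n \<Longrightarrow> Z \<in> carrier_mat n n \<Longrightarrow> X * (Y + Z) = X * Y + X * Z"
  by (rule mult_add_distrib_mat)
lemma sqadl: "(X :: complex mat) \<in> carrier_mat n n \<Longrightarrow> Y \<in> carrier_mat n n \<Longrightarrow> Z \<in> carrier_mat n n \<Longrightarrow> (X + Y) * Z = X * Z + Y * Z"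
  by (rule add_mult_distrib_mat)
lemma sqsmad: "(X :: complex mat) \<in> carrier_mat n n \<Longrightarrow> Y \<in> carrier_mat n n \<Longrightarrow> k \<cdot>\<^sub>m (X + Y) = k \<cdot>\<^sub>m X + k \<cdot>\<^sub>m Y"
  by (rule add_smult_distrib_left_mat)

lemma ecnj: "cnj (exp (\<i> * complex_of_real t)) = exp (- (\<i> * complex_of_real t))"
  by (simp add: exp_cnj)

lemma H_theta_carrier: "A \<in> carrier_mat n n \<Longrightarrow> H_theta t A \<in> carrier_mat n n"
  unfolding H_theta_def by auto

lemma normal_eigs:
  fixes A :: "complex mat"
  assumes A: "A \<in> carrier_mat n n" and nA: "normal_mat A"
  shows "\<exists>lam :: nat \<Rightarrow> complex. \<forall>t. proots (char_poly (H_theta t A))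
            = mset (map (\<lambda>k. complex_of_real (Re (exp (\<i> * of_real t) * lam k))) [0..<n])"
proof -
  obtain es where es: "char_poly A = (\<Prod> a \<leftarrow> es. [:- a, 1:])" "length es = n"
    using char_poly_factorized[OF A] by blast
  obtain B P where sim: "similar_mat_wit A B P (mat_adjoint P)" and ut: "upper_triangular B"
    and dg: "diag_mat B = es" using unitary_schur[OF A es(1)] by blast
  define Q where "Q = mat_adjoint P"
  from similar_mat_witD2[OF A sim[folded Q_def]]
  have B: "B \<in> carrier_mat n n" and P: "P \<in> carrier_mat n n" and Q: "Q \<in> carrier_mat n n"
    and PQ: "P * Q = 1\<^sub>m n" and QP: "Q * P = 1\<^sub>m n" and AB: "A = P * B * Q" by auto
  have cs: "mat_adjoint B \<in> carrier_mat n n" "mat_adjoint A \<in> carrier_mat n n" using A B by auto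
  have QPY: "Q * (P * Y) = Y" if "Y \<in> carrier_mat n n" for Y
    using that P Q QP by (metis assoc_mult_mat left_mult_one_mat)
  have PQY: "P * (Q * Y) = Y" if "Y \<in> carrier_mat n n" for Y
    using that P Q PQ by (metis assoc_mult_mat left_mult_one_mat)
  note ms = sqm[of _ n] sqsm[of _ n] sqad[of _ n] sqassoc[of _ n] sqr1[of _ n] sql1[of _ n]
    sqsmr[of _ n] sqsml[of _ n] sqadr[of _ n] sqadl[of _ n] sqsmad[of _ n] QPY PQY QP PQ A B P Q cs
  have BA: "B = Q * A * P" unfolding AB by (simp add: ms)
  have adjQ: "mat_adjoint Q = P" unfolding Q_def by simp
  have adjA: "mat_adjoint A = P * mat_adjoint B * Q"
  proof -
    have e1: "mat_adjoint (P * B * Q) = mat_adjoint Q * mat_adjoint (P * B)"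
      by (rule adj_mult[of _ n n _ n], insert P B Q, auto)
    have e2: "mat_adjoint (P * B) = mat_adjoint B * mat_adjoint P"
      by (rule adj_mult[of _ n n _ n], insert P B, auto)
    have "mat_adjoint A = P * (mat_adjoint B * Q)" unfolding AB e1 e2 adjQ Q_def[symmetric] ..
    then show ?thesis by (simp add: ms)
  qed
  have adjB: "mat_adjoint B = Q * mat_adjoint A * P" unfolding adjA by (simp add: ms)
  have nB: "B * mat_adjoint B = mat_adjoint B * B"
  proof -
    have nA': "A * mat_adjoint A = mat_adjoint A * A" using nA unfolding normal_mat_def .
    have "B * mat_adjoint B = Q * (A * mat_adjoint A) * P" unfolding adjB unfolding BA by (simp add: ms)
    also have "\<dots> = Q * (mat_adjoint A * A) * P" using nA' by simp
    also have "\<dots> = mat_adjoint B * B" unfolding adjB unfolding BA by (simp add: ms)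
    finally show ?thesis .
  qed
  have off: "\<And>i j. i < n \<Longrightarrow> j < n \<Longrightarrow> i \<noteq> j \<Longrightarrow> B $$ (i,j) = 0"
    using normal_ut_diag[OF B ut nB] .
  define lam where "lam k = B $$ (k,k)" for k
  show ?thesis
  proof (intro exI[of _ lam] allI)
    fix t
    define e where "e = exp (\<i> * complex_of_real t)"
    define HB where "HB = H_theta t B"
    have HB: "HB \<in> carrier_mat n n" unfolding HB_def using H_theta_carrier[OF B] .
    have HA: "H_theta t A = P * HB * Q"
    proof -
      have "H_theta t A = (1/2) \<cdot>\<^sub>m (e \<cdot>\<^sub>m (P * B * Q) + cnj e \<cdot>\<^sub>m (P * mat_adjoint B * Q))"
        unfolding H_theta_def e_def ecnj adjA[symmetric] AB[symmetric] by (rule refl)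
      also have "\<dots> = P * HB * Q" unfolding HB_def H_theta_def e_def[symmetric]
        by (simp add: ms ecnj[symmetric] e_def)
      finally show ?thesis .
    qed
    have simH: "similar_mat (H_theta t A) HB"
      unfolding similar_mat_def similar_mat_wit_def Let_def using HA P Q HB PQ QP H_theta_carrier[OF A]
      by (intro exI[of _ P] exI[of _ Q]) auto
    have utHB: "upper_triangular HB"
      using off B unfolding HB_def H_theta_def by (auto intro!: upper_triangularI)
    have dHB: "diag_mat HB = map (\<lambda>k. complex_of_real (Re (e * lam k))) [0..<n]"
    proof -
      have "HB $$ (k,k) = complex_of_real (Re (e * lam k))" if k: "k < n" for k
      proof -
        have "HB $$ (k,k) = (1/2) * (e * lam k + cnj e * cnj (lam k))"
          unfolding HB_def H_theta_def lam_def e_def using k B by (simp add: ecnj[symmetric])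
        also have "\<dots> = complex_of_real (Re (e * lam k))"
          by (simp add: complex_eq_iff)
        finally show ?thesis .
      qed
      then show ?thesis unfolding diag_mat_def using HB by auto
    qed
    have "char_poly (H_theta t A) = char_poly HB" using char_poly_similar[OF simH] .
    also have "\<dots> = (\<Prod> a \<leftarrow> diag_mat HB. [:- a, 1:])" using char_poly_upper_triangular[OF HB utHB] .
    finally have cpe: "char_poly (H_theta t A) = (\<Prod> a \<leftarrow> diag_mat HB. [:- a, 1:])" .
    show "proots (char_poly (H_theta t A)) =
        mset (map (\<lambda>k. complex_of_real (Re (exp (\<i> * of_real t) * lam k))) [0..<n])"
      unfolding cpe proots_lin_prod dHB e_def ..
  qed
qed



lemma sorted_desc_eq: fixes y :: "nat \<Rightarrow> real"
  assumes "mset is = mset [0..<n]" "sorted_wrt (\<ge>) (map y is)"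
  shows "rev (sort (map y [0..<n])) = map y is"
proof -
  have "sort (map y [0..<n]) = rev (map y is)"
  proof (rule properties_for_sort)
    show "mset (rev (map y is)) = mset (map y [0..<n])" using assms(1) by (simp add: mset_map)
    show "sorted (rev (map y is))" using assms(2) by (simp add: sorted_wrt_rev)
  qed
  then show ?thesis by simp
qed

lemma exp_inj: "inj_on (\<lambda>t::real. exp (\<i> * complex_of_real t)) {0..<2*pi}"
proof (rule inj_onI)
  fix s t :: real assume s: "s \<in> {0..<2*pi}" and t: "t \<in> {0..<2*pi}"
    and e: "exp (\<i> * complex_of_real s) = exp (\<i> * complex_of_real t)"
  then obtain m :: int where m: "\<i> * complex_of_real s = \<i> * complex_of_real t + (of_int (2 * m) * pi) * \<i>"
    using exp_eq by blast
  then have "s = t + 2 * m * pi" by (simp add: complex_eq_iff)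
  moreover have "\<bar>s - t\<bar> < 2 * pi" using s t by auto
  ultimately have "\<bar>real_of_int m\<bar> * (2 * pi) < 1 * (2 * pi)" by (simp add: abs_mult)
  then have "\<bar>real_of_int m\<bar> < 1" using pi_gt_zero by (simp only: mult_less_cancel_right)
  then have "m = 0" by linarith
  with \<open>s = t + 2 * m * pi\<close> show "s = t" by simp
qed

lemma crit_finite: assumes d: "d \<noteq> 0"
  shows "finite {t \<in> {0..<2*pi}. Re (exp (\<i> * complex_of_real t) * d) = 0}"
proof -
  let ?f = "\<lambda>t::real. exp (\<i> * complex_of_real t)"
  have sub: "{t \<in> {0..<2*pi}. Re (?f t * d) = 0} \<subseteq> ?f -` {\<i> * cmod d / d, - \<i> * cmod d / d} \<inter> {0..<2*pi}"
  proof (rule subsetI)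
    fix t :: real assume tt: "t \<in> {t \<in> {0..<2*pi}. Re (?f t * d) = 0}"
    then have t: "t \<in> {0..<2*pi}" and r: "Re (?f t * d) = 0" by auto
    define z where "z = ?f t * d"
    have nz: "cmod z = cmod d" unfolding z_def by (simp add: norm_mult)
    have zi: "z = \<i> * complex_of_real (Im z)" using r unfolding z_def[symmetric] by (simp add: complex_eq_iff)
    have "cmod z = cmod (\<i> * complex_of_real (Im z))" using zi by (rule arg_cong)
    then have "cmod z = \<bar>Im z\<bar>" by (simp add: norm_mult)
    then have "Im z = cmod d \<or> Im z = - cmod d" using nz by linarith
    then have "z = \<i> * cmod d \<or> z = - \<i> * cmod d" using zi by auto
    then have "?f t = \<i> * cmod d / d \<or> ?f t = - \<i> * cmod d / d" unfolding z_def using d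
      by (auto simp: field_simps)
    then show "t \<in> ?f -` {\<i> * cmod d / d, - \<i> * cmod d / d} \<inter> {0..<2*pi}" using t by auto
  qed
  show ?thesis by (rule finite_subset[OF sub finite_vimage_IntI[OF _ exp_inj]]) simp
qed

lemma ecos[simp]: "Re (exp (\<i> * complex_of_real x)) = cos x"
  by (simp add: Re_exp)
lemma esin[simp]: "Im (exp (\<i> * complex_of_real x)) = sin x"
  by (simp add: Im_exp)

lemma conic:
  assumes "a < th" "th < b" "b - a < pi"
  shows "\<exists>s u. s \<ge> 0 \<and> u \<ge> 0 \<and> exp (\<i> * complex_of_real th)
     = complex_of_real s * exp (\<i> * complex_of_real a) + complex_of_real u * exp (\<i> * complex_of_real b)"
proof -
  have p: "sin (b - a) > 0" "sin (b - th) > 0" "sin (th - a) > 0" using assms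
    by (auto intro!: sin_gt_zero)
  define s where "s = sin (b - th) / sin (b - a)"
  define u where "u = sin (th - a) / sin (b - a)"
  have id1: "sin (b - th) * cos a + sin (th - a) * cos b = sin (b - a) * cos th"
    by (simp add: sin_diff cos_diff algebra_simps)
  have id2: "sin (b - th) * sin a + sin (th - a) * sin b = sin (b - a) * sin th"
    by (simp add: sin_diff cos_diff algebra_simps)
  have "exp (\<i> * complex_of_real th)
     = complex_of_real s * exp (\<i> * complex_of_real a) + complex_of_real u * exp (\<i> * complex_of_real b)"
    using p id1 id2 unfolding s_def u_def
    by (simp add: complex_eq_iff field_simps)
  moreover have "s \<ge> 0" "u \<ge> 0" unfolding s_def u_def using p by auto
  ultimately show ?thesis by blast
qed


definition xx :: "(nat \<Rightarrow> complex) \<Rightarrow> real \<Rightarrow> nat \<Rightarrow> real" where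
  "xx lam t k = Re (exp (\<i> * complex_of_real t) * lam k)"

definition gg :: "nat \<Rightarrow> (nat \<Rightarrow> complex) \<Rightarrow> (nat \<Rightarrow> real) \<Rightarrow> real \<Rightarrow> real" where
  "gg n lam c t = (\<Sum>j<n. c j * rev (sort (map (xx lam t) [0..<n])) ! j)"

lemma xx_eq: "xx lam t k = cos t * Re (lam k) - sin t * Im (lam k)"
  unfolding xx_def by simp

lemma xx_cont: "isCont (\<lambda>t. xx lam t k - xx lam t l) x"
  unfolding xx_eq by (intro continuous_intros)

lemma gg_is:
  assumes "mset is = mset [0..<n]" "sorted_wrt (\<ge>) (map (xx lam t) is)"
  shows "gg n lam c t = Re (exp (\<i> * complex_of_real t) * (\<Sum>j<n. complex_of_real (c j) * lam (is ! j)))"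
proof -
  have len: "length is = n" using mset_eq_length[OF assms(1)] by simp
  have "gg n lam c t = (\<Sum>j<n. c j * xx lam t (is ! j))"
    unfolding gg_def sorted_desc_eq[OF assms] using len by simp
  also have "\<dots> = Re (exp (\<i> * complex_of_real t) * (\<Sum>j<n. complex_of_real (c j) * lam (is ! j)))"
    unfolding sum_distrib_left Re_sum xx_def by (rule sum.cong) (simp_all add: algebra_simps)
  finally show ?thesis .
qed

lemma exp2pi: "exp (\<i> * complex_of_real (2*pi)) = exp (\<i> * complex_of_real 0)"
  unfolding complex_eq_iff ecos esin by simp

lemma gg_2pi: "gg n lam c (2*pi) = gg n lam c 0"
  unfolding gg_def xx_def exp2pi ..

lemma exp_pi2: "exp (\<i> * complex_of_real (pi/2)) = \<i>"
  unfolding complex_eq_iff ecos esin by simp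
lemma exp_pi: "exp (\<i> * complex_of_real pi) = -1"
  by (simp add: complex_eq_iff)
lemma exp_3pi2: "exp (\<i> * complex_of_real (3*pi/2)) = -\<i>"
proof -
  have e: "3*pi/2 = pi/2 + pi" by simp
  show ?thesis unfolding complex_eq_iff ecos esin e cos_add sin_add by simp
qed



lemma endpoint_sorted:
  fixes lam :: "nat \<Rightarrow> complex"
  assumes ab: "a < th" "th < b"
    and nc: "\<And>t. a < t \<Longrightarrow> t < b \<Longrightarrow> lam k \<noteq> lam l \<Longrightarrow> xx lam t k \<noteq> xx lam t l"
    and ge: "xx lam th k \<ge> xx lam th l"
  shows "xx lam a k \<ge> xx lam a l" "xx lam b k \<ge> xx lam b l"
proof -
  let ?d = "\<lambda>t. xx lam t k - xx lam t l"
  have cont: "\<forall>x. isCont ?d x" using xx_cont by blast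
  show "xx lam a k \<ge> xx lam a l"
  proof (cases "lam k = lam l")
    case True then show ?thesis by (simp add: xx_def)
  next
    case False
    have pos: "?d th > 0" using ge nc[OF ab False] by fastforce
    show ?thesis
    proof (rule ccontr)
      assume na: "\<not> ?thesis"
      then have "?d a \<le> 0" by simp
      from IVT[of ?d a 0 th, OF this _ _] pos ab cont obtain x where x: "a \<le> x" "x \<le> th" "?d x = 0"
        by auto
      have "x \<noteq> a" using x na by auto
      moreover have "x \<noteq> th" using x pos by auto
      ultimately show False using nc[of x] x ab False by auto
    qed
  qed
  show "xx lam b k \<ge> xx lam b l"
  proof (cases "lam k = lam l")
    case True then show ?thesis by (simp add: xx_def)
  next
    case False
    have pos: "?d th > 0" using ge nc[OF ab False] by fastforce
    show ?thesis
    proof (rule ccontr)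
      assume na: "\<not> ?thesis"
      then have "?d b \<le> 0" by simp
      from IVT2[of ?d b 0 th, OF this _ _] pos ab cont obtain x where x: "th \<le> x" "x \<le> b" "?d x = 0"
        by auto
      have "x \<noteq> b" using x na by auto
      moreover have "x \<noteq> th" using x pos by auto
      ultimately show False using nc[of x] x ab False by auto
    qed
  qed
qed

lemma sorted_transfer:
  assumes s: "sorted_wrt (\<ge>) (map (xx lam th) is)"
    and tr: "\<And>k l. k \<in> set is \<Longrightarrow> l \<in> set is \<Longrightarrow> xx lam th k \<ge> xx lam th l \<Longrightarrow> xx lam g k \<ge> xx lam g l"
  shows "sorted_wrt (\<ge>) (map (xx lam g) is)"
  using s unfolding sorted_wrt_map
  by (rule sorted_wrt_mono_rel[rotated]) (use tr in auto)


lemma halfplane_eq: "closed_halfplane (cnj e) b = {v. Re (e * v) \<le> b}"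
  unfolding closed_halfplane_def by simp

lemma geo:
  fixes n :: nat and lam :: "nat \<Rightarrow> complex" and c :: "nat \<Rightarrow> real"
  defines "S \<equiv> (\<Inter>\<theta>\<in>{0..<2*pi}. {v. Re (exp (\<i> * complex_of_real \<theta>) * v) \<le> gg n lam c \<theta>})"
  shows "(\<exists>F :: (complex \<times> real) set. finite F \<and> (\<forall>(a, b)\<in>F. a \<noteq> 0) \<and>
           S = (\<Inter>(a, b)\<in>F. closed_halfplane a b)) \<and> bounded S"
proof -
  define H where "H t = {v. Re (exp (\<i> * complex_of_real t) * v) \<le> gg n lam c t}" for t
  have S: "S = (\<Inter>t\<in>{0..<2*pi}. H t)" unfolding S_def H_def ..
  define Q4 where "Q4 = {0, pi/2, pi, 3*pi/2}"
  define C where "C = {t \<in> {0..<2*pi}. \<exists>k<n. \<exists>l<n. lam k \<noteq> lam l \<and> Re (exp (\<i> * complex_of_real t) * (lam k - lam l)) = 0}"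
  define P where "P = Q4 \<union> C"
  have Cfin: "finite C"
  proof -
    have "C \<subseteq> (\<Union>kl\<in>{kl. fst kl < n \<and> snd kl < n \<and> lam (fst kl) \<noteq> lam (snd kl)}.
          {t \<in> {0..<2*pi}. Re (exp (\<i> * complex_of_real t) * (lam (fst kl) - lam (snd kl))) = 0})"
      unfolding C_def by force
    moreover have "finite (\<Union>kl\<in>{kl. fst kl < n \<and> snd kl < n \<and> lam (fst kl) \<noteq> lam (snd kl)}.
          {t \<in> {0..<2*pi}. Re (exp (\<i> * complex_of_real t) * (lam (fst kl) - lam (snd kl))) = 0})"
    proof (rule finite_UN_I)
      have "{kl. fst kl < n \<and> snd kl < n \<and> lam (fst kl) \<noteq> lam (snd kl)} \<subseteq> {..<n} \<times> {..<n}" by auto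
      then show "finite {kl. fst kl < n \<and> snd kl < n \<and> lam (fst kl) \<noteq> lam (snd kl)}"
        by (rule finite_subset) simp
    next
      fix kl assume "kl \<in> {kl. fst kl < n \<and> snd kl < n \<and> lam (fst kl) \<noteq> lam (snd kl)}"
      then show "finite {t \<in> {0..<2*pi}. Re (exp (\<i> * complex_of_real t) * (lam (fst kl) - lam (snd kl))) = 0}"
        by (intro crit_finite) auto
    qed
    ultimately show ?thesis by (rule finite_subset)
  qed
  have Pfin: "finite P" unfolding P_def Q4_def using Cfin by simp
  have pi0: "pi > 0" by (rule pi_gt_zero)
  have Q4sub: "Q4 \<subseteq> {0..<2*pi}" unfolding Q4_def using pi0 by auto
  have Psub: "P \<subseteq> {0..<2*pi}" unfolding P_def using Q4sub C_def by auto
  define F where "F = (\<lambda>t. (cnj (exp (\<i> * complex_of_real t)), gg n lam c t)) ` P"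
  have FH: "(\<Inter>(a, b)\<in>F. closed_halfplane a b) = (\<Inter>t\<in>P. H t)"
    unfolding F_def H_def by (auto simp: halfplane_eq)
  have Fnz: "\<forall>(a, b)\<in>F. a \<noteq> 0" unfolding F_def by auto
  have Ffin: "finite F" unfolding F_def using Pfin by simp
  have main: "S = (\<Inter>t\<in>P. H t)"
  proof
    show "S \<subseteq> (\<Inter>t\<in>P. H t)" unfolding S using Psub by auto
  next
    show "(\<Inter>t\<in>P. H t) \<subseteq> S"
    proof
      fix v assume vP: "v \<in> (\<Inter>t\<in>P. H t)"
      have v2pi: "v \<in> H (2*pi)"
      proof -
        have "0 \<in> P" unfolding P_def Q4_def by simp
        then have "v \<in> H 0" using vP by auto
        then show ?thesis unfolding H_def gg_2pi exp2pi .
      qed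
      show "v \<in> S" unfolding S
      proof
        fix th assume th: "th \<in> {0..<2*pi}"
        show "v \<in> H th"
        proof (cases "th \<in> P")
          case True then show ?thesis using vP by auto
        next
          case thP: False
          have th0: "th > 0" using th thP unfolding P_def Q4_def by auto
          define L where "L = {p \<in> P. p < th}"
          have L1: "finite L" unfolding L_def by (rule finite_subset[OF _ Pfin]) auto
          have L2: "0 \<in> L" unfolding L_def P_def Q4_def using th0 by auto
          note L = L1 L2
          define a where "a = Max L"
          have aL: "a \<in> L" unfolding a_def using L Max_in by blast
          have a: "a \<in> P" "a < th" using aL unfolding L_def by auto
          have amax: "\<And>p. p \<in> P \<Longrightarrow> p < th \<Longrightarrow> p \<le> a" unfolding a_def using L L_def by auto
          define R where "R = {p \<in> P. th < p} \<union> {2*pi}"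
          have R: "finite R" "R \<noteq> {}" unfolding R_def using Pfin by auto
          define b where "b = Min R"
          have bR: "b \<in> R" unfolding b_def using R Min_in by blast
          have b: "th < b" "b \<le> 2*pi" using bR th R unfolding R_def b_def by auto
          have bmin: "\<And>p. p \<in> P \<Longrightarrow> th < p \<Longrightarrow> b \<le> p" unfolding b_def using R R_def by auto
          have vb: "v \<in> H b" using bR vP v2pi unfolding R_def by auto
          have va: "v \<in> H a" using a vP by auto
          have a0: "a \<ge> 0" using a Psub by auto
          have q: "q \<in> P" if "q \<in> Q4" for q using that unfolding P_def by auto
          have gap: "b - a < pi"
          proof -
            have h: "pi/2 \<in> P" "pi \<in> P" "3*pi/2 \<in> P" using q unfolding Q4_def by auto
            have f1: "pi/2 < th \<longrightarrow> pi/2 \<le> a" "pi/2 > th \<longrightarrow> b \<le> pi/2"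
              "pi < th \<longrightarrow> pi \<le> a" "pi > th \<longrightarrow> b \<le> pi"
              "3*pi/2 < th \<longrightarrow> 3*pi/2 \<le> a" "3*pi/2 > th \<longrightarrow> b \<le> 3*pi/2"
              using amax[OF h(1)] bmin[OF h(1)] amax[OF h(2)] bmin[OF h(2)] amax[OF h(3)] bmin[OF h(3)]
              by blast+
            have "th \<noteq> pi/2" "th \<noteq> pi" "th \<noteq> 3*pi/2" using thP h by metis+
            then show ?thesis using f1 a0 b pi0 by linarith
          qed
          have nocrit: "xx lam t k \<noteq> xx lam t l"
            if "a < t" "t < b" "lam k \<noteq> lam l" "k < n" "l < n" for t k l
          proof
            assume eq: "xx lam t k = xx lam t l"
            have "t \<in> {0..<2*pi}" using that a0 b by auto
            moreover have "Re (exp (\<i> * complex_of_real t) * (lam k - lam l)) = 0"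
              using eq unfolding xx_def by (simp add: algebra_simps)
            ultimately have "t \<in> P" unfolding P_def C_def using that by blast
            then show False using amax[of t] bmin[of t] that thP by (cases "t < th"; cases "th < t") auto
          qed
          define "is" where "is = sort_key (\<lambda>k. - xx lam th k) [0..<n]"
          have mis: "mset is = mset [0..<n]" unfolding is_def by simp
          have setis: "set is = {..<n}" using mset_eq_setD[OF mis] by auto
          have sth: "sorted_wrt (\<ge>) (map (xx lam th) is)"
          proof -
            have "sorted (map (\<lambda>k. - xx lam th k) is)" unfolding is_def by (rule sorted_sort_key)
            then show ?thesis unfolding sorted_wrt_map by (rule sorted_wrt_mono_rel[rotated]) auto
          qed
          have sa: "sorted_wrt (\<ge>) (map (xx lam a) is)"
            by (rule sorted_transfer[OF sth], rule endpoint_sorted(1)[OF a(2) b(1)])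
              (use nocrit setis in auto)
          have sb: "sorted_wrt (\<ge>) (map (xx lam b) is)"
            by (rule sorted_transfer[OF sth], rule endpoint_sorted(2)[OF a(2) b(1)])
              (use nocrit setis in auto)
          define p where "p = (\<Sum>j<n. complex_of_real (c j) * lam (is ! j))"
          have ga: "gg n lam c a = Re (exp (\<i> * complex_of_real a) * p)" unfolding p_def by (rule gg_is[OF mis sa])
          have gb: "gg n lam c b = Re (exp (\<i> * complex_of_real b) * p)" unfolding p_def by (rule gg_is[OF mis sb])
          have gt: "gg n lam c th = Re (exp (\<i> * complex_of_real th) * p)" unfolding p_def by (rule gg_is[OF mis sth])
          obtain s u where su: "s \<ge> 0" "u \<ge> 0" and ee: "exp (\<i> * complex_of_real th)
             = complex_of_real s * exp (\<i> * complex_of_real a) + complex_of_real u * exp (\<i> * complex_of_real b)"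
            using conic[OF a(2) b(1) gap] by blast
          have ia: "Re (exp (\<i> * complex_of_real a) * (v - p)) \<le> 0" using va ga unfolding H_def by (simp add: algebra_simps)
          have ib: "Re (exp (\<i> * complex_of_real b) * (v - p)) \<le> 0" using vb gb unfolding H_def by (simp add: algebra_simps)
          have "Re (exp (\<i> * complex_of_real th) * (v - p)) = s * Re (exp (\<i> * complex_of_real a) * (v - p)) + u * Re (exp (\<i> * complex_of_real b) * (v - p))"
            unfolding ee by (simp add: algebra_simps)
          also have "\<dots> \<le> 0" using ia ib su by (simp add: add_nonpos_nonpos mult_nonneg_nonpos)
          finally show "v \<in> H th" unfolding H_def gt by (simp add: algebra_simps)
        qed
      qed
    qed
  qed
  have bnd: "bounded S"
  proof -
    define M where "M = \<bar>gg n lam c 0\<bar> + \<bar>gg n lam c pi\<bar> + \<bar>gg n lam c (pi/2)\<bar> + \<bar>gg n lam c (3*pi/2)\<bar>"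
    have "cmod v \<le> M" if v: "v \<in> S" for v
    proof -
      have "v \<in> H t" if "t \<in> Q4" for t using v Q4sub that unfolding S by auto
      then have "v \<in> H 0" "v \<in> H pi" "v \<in> H (pi/2)" "v \<in> H (3*pi/2)" unfolding Q4_def by auto
      then have "Re v \<le> gg n lam c 0" "- Re v \<le> gg n lam c pi" "- Im v \<le> gg n lam c (pi/2)"
        "Im v \<le> gg n lam c (3*pi/2)"
        unfolding H_def exp_pi exp_pi2 exp_3pi2 by (auto simp: exp2pi[symmetric, simplified])
      then have "\<bar>Re v\<bar> + \<bar>Im v\<bar> \<le> M" unfolding M_def by linarith
      then show ?thesis using cmod_le[of v] by linarith
    qed
    then show ?thesis unfolding bounded_iff by blast
  qed
  have SF: "S = (\<Inter>(a, b)\<in>F. closed_halfplane a b)" unfolding FH by (rule main)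
  show ?thesis
    apply (intro conjI exI[of _ F])
       apply (fact Ffin) apply (fact Fnz) apply (fact SF) by (fact bnd)
qed


lemma imR: "image_mset Re (mset (map f xs)) = mset (map (\<lambda>k. Re (f k)) xs)"
  by (induct xs) auto

theorem mainTheorem3:
  fixes A :: "complex mat" and n :: nat and c :: "nat \<Rightarrow> real"
  assumes "A \<in> carrier_mat n n"
    and "normal_mat A"
  shows "(\<exists>F :: (complex \<times> real) set. finite F \<and> (\<forall>(a, b)\<in>F. a \<noteq> 0) \<and>
           weighted_nr n A c = (\<Inter>(a, b)\<in>F. closed_halfplane a b))
         \<and> bounded (weighted_nr n A c)"
proof -
  obtain lam :: "nat \<Rightarrow> complex" where lam: "\<And>t. proots (char_poly (H_theta t A))
            = mset (map (\<lambda>k. complex_of_real (Re (exp (\<i> * of_real t) * lam k))) [0..<n])"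
    using normal_eigs[OF assms] by blast
  have xe: "(\<lambda>k. Re (complex_of_real (Re (exp (\<i> * of_real t) * lam k)))) = xx lam t" for t
    by (rule ext) (simp add: xx_def)
  have eq: "(\<Sum>j<n. c j * herm_eig (H_theta t A) j) = gg n lam c t" for t
    unfolding herm_eig_def herm_eigs_def gg_def lam imR sorted_list_of_multiset_mset xe ..
  have W: "weighted_nr n A c = (\<Inter>\<theta>\<in>{0..<2*pi}. {v. Re (exp (\<i> * complex_of_real \<theta>) * v) \<le> gg n lam c \<theta>})"
    unfolding weighted_nr_def eq ..
  show ?thesis unfolding W by (rule geo)
qed

end
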